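(* Let $G$ be a graph of order $n$ with no isolated vertices such that $\gamma_{\rm gr}^t(G)=n$, and let $S=(v_1,\ldots,v_n)$ be a total dominating sequence of $G$ of length $n$. If $x$ and $y$ are vertices of $G$ such that $x$ footprints $y$ with respect to $S$, then $y$ also footprints $x$ with respect to $S$.
   Context: All graphs are finite, simple, without isolated vertices. $N(v)$ denotes the open neighborhood of $v$. A sequence $S=(v_1,\ldots,v_k)$ of distinct vertices of $G$ is a legal (open neighborhood) sequence if $N(v_i)\setminus \bigcup_{j=1}^{i-1} N(v_j)\neq\emptyset$ for every $i\in\{2,\ldots,k\}$; it is a total dominating sequence if moreover $\{v_1,\ldots,v_k\}$ is a total dominating set of $G$ (every vertex has a neighbor in it). For a legal sequence $S$, the vertex $v_i$ footprints every vertex $u \in N(v_i)\setminus \bigcup_{j=1}^{i-1} N(v_j)$. The Grundy total domination number $\gamma_{\rm gr}^t(G)$ is the maximum length of a total dominating sequence of $G$. *)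

theory Defs
  imports Main
begin

definition graph :: "'a set \<Rightarrow> ('a \<Rightarrow> 'a \<Rightarrow> bool) \<Rightarrow> bool" where
  "graph V E \<longleftrightarrow> finite V \<and> (\<forall>u v. E u v \<longrightarrow> u \<in> V \<and> v \<in> V)
     \<and> (\<forall>u v. E u v \<longrightarrow> E v u) \<and> (\<forall>v. \<not> E v v)"

definition no_isolated :: "'a set \<Rightarrow> ('a \<Rightarrow> 'a \<Rightarrow> bool) \<Rightarrow> bool" where
  "no_isolated V E \<longleftrightarrow> (\<forall>v\<in>V. \<exists>u. E v u)"

definition nbhd :: "'a set \<Rightarrow> ('a \<Rightarrow> 'a \<Rightarrow> bool) \<Rightarrow> 'a \<Rightarrow> 'a set" where
  "nbhd V E v = {u \<in> V. E v u}"

definition legal_seq :: "'a set \<Rightarrow> ('a \<Rightarrow> 'a \<Rightarrow> bool) \<Rightarrow> 'a list \<Rightarrow> bool" where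
  "legal_seq V E S \<longleftrightarrow> distinct S \<and> set S \<subseteq> V \<and>
     (\<forall>i. 0 < i \<and> i < length S \<longrightarrow>
        nbhd V E (S ! i) - (\<Union>j<i. nbhd V E (S ! j)) \<noteq> {})"

definition total_dominating_set :: "'a set \<Rightarrow> ('a \<Rightarrow> 'a \<Rightarrow> bool) \<Rightarrow> 'a set \<Rightarrow> bool" where
  "total_dominating_set V E D \<longleftrightarrow> D \<subseteq> V \<and> (\<forall>v\<in>V. \<exists>u\<in>D. E v u)"

definition total_dominating_seq :: "'a set \<Rightarrow> ('a \<Rightarrow> 'a \<Rightarrow> bool) \<Rightarrow> 'a list \<Rightarrow> bool" where
  "total_dominating_seq V E S \<longleftrightarrow> legal_seq V E S \<and> total_dominating_set V E (set S)"

definition grundy_total_dom :: "'a set \<Rightarrow> ('a \<Rightarrow> 'a \<Rightarrow> bool) \<Rightarrow> nat" where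
  "grundy_total_dom V E = Max {length S | S. total_dominating_seq V E S}"

definition footprints :: "'a set \<Rightarrow> ('a \<Rightarrow> 'a \<Rightarrow> bool) \<Rightarrow> 'a list \<Rightarrow> 'a \<Rightarrow> 'a \<Rightarrow> bool" where
  "footprints V E S x u \<longleftrightarrow> (\<exists>i<length S. S ! i = x \<and>
     u \<in> nbhd V E (S ! i) - (\<Union>j<i. nbhd V E (S ! j)))"

end

theory Submission
  imports Defs
begin

theorem mainTheorem4:
  fixes V :: "'a set" and E :: "'a \<Rightarrow> 'a \<Rightarrow> bool" and S :: "'a list" and x y :: 'a
  assumes "graph V E"
    and "no_isolated V E"
    and "grundy_total_dom V E = card V"
    and "total_dominating_seq V E S"
    and "length S = card V"
    and "x \<in> V" and "y \<in> V"
    and "footprints V E S x y"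
  shows "footprints V E S y x"
proof -
  define n where "n = length S"
  define F where "F i = nbhd V E (S!i) - (\<Union>j<i. nbhd V E (S!j))" for i
  have gr: "finite V" "\<And>u v. E u v \<Longrightarrow> u \<in> V \<and> v \<in> V" "\<And>u v. E u v \<Longrightarrow> E v u"
    using assms(1) unfolding graph_def by auto
  have leg: "legal_seq V E S" and td: "total_dominating_set V E (set S)"
    using assms(4) unfolding total_dominating_seq_def by auto
  have dist: "distinct S" and sub: "set S \<subseteq> V"
    and legi: "\<And>i. 0 < i \<Longrightarrow> i < n \<Longrightarrow> F i \<noteq> {}"
    using leg unfolding legal_seq_def F_def n_def by auto
  have setS: "set S = V"
    using card_subset_eq[OF gr(1) sub] distinct_card[OF dist] assms(5) by simp
  have FV: "F i \<subseteq> V" for i unfolding F_def nbhd_def by auto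
  have Funiq: "w \<in> F i \<Longrightarrow> w \<in> F i' \<Longrightarrow> i = i'" for w i i'
  proof (rule ccontr)
    assume a: "w \<in> F i" "w \<in> F i'" "i \<noteq> i'"
    show False
    proof (cases "i < i'")
      case True then show ?thesis using a unfolding F_def by auto
    next
      case False then have "i' < i" using a by simp
      then show ?thesis using a unfolding F_def by auto
    qed
  qed
  have Fne: "F i \<noteq> {}" if "i < n" for i
  proof (cases "i = 0")
    case True
    have "S!0 \<in> V" using that True setS n_def by (metis nth_mem)
    then obtain u where "E (S!0) u" using assms(2) unfolding no_isolated_def by auto
    then have "u \<in> F 0" using gr(2) unfolding F_def nbhd_def by auto
    then show ?thesis using True by auto
  next
    case False then show ?thesis using legi that by simp
  qed
  have Fcov: "\<exists>i<n. w \<in> F i" if "w \<in> V" for w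
  proof -
    have "\<exists>u\<in>set S. E w u" using td that unfolding total_dominating_set_def by simp
    then obtain u where u: "u \<in> set S" "E w u" by (elim bexE)
    then obtain k where k: "k < n" "S!k = u" unfolding n_def by (metis in_set_conv_nth)
    have ex: "E (S!k) w" using u k gr(3) by simp
    define i where "i = (LEAST i. E (S!i) w)"
    have i1: "E (S!i) w" unfolding i_def by (rule LeastI[of "\<lambda>i. E (S!i) w", OF ex])
    have i2: "i \<le> k" unfolding i_def by (rule Least_le[of "\<lambda>i. E (S!i) w", OF ex])
    have i3: "\<not> E (S!j) w" if "j < i" for j using not_less_Least[of j "\<lambda>i. E (S!i) w"] that i_def by simp
    have "w \<in> F i" using i1 i3 that unfolding F_def nbhd_def by auto
    moreover have "i < n" using i2 k by simp
    ultimately show ?thesis by blast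
  qed
  have Vun: "V = (\<Union>i<n. F i)" using Fcov FV by blast
  have fin: "finite (F i)" for i using FV gr(1) finite_subset by blast
  have cardsum: "card V = (\<Sum>i<n. card (F i))"
    unfolding Vun
  proof (rule card_UN_disjoint)
    show "finite {..<n}" by simp
    show "\<forall>i\<in>{..<n}. finite (F i)" using fin by simp
    show "\<forall>i\<in>{..<n}. \<forall>j\<in>{..<n}. i \<noteq> j \<longrightarrow> F i \<inter> F j = {}"
    proof (intro ballI impI)
      fix i j :: nat assume "i \<noteq> j"
      then show "F i \<inter> F j = {}" using Funiq by blast
    qed
  qed
  have card1: "card (F i) = 1" if "i < n" for i
  proof (rule ccontr)
    assume "card (F i) \<noteq> 1"
    moreover have "card (F i) \<noteq> 0" using Fne[OF that] fin by simp
    ultimately have c2: "card (F i) \<ge> 2" by simp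
    have ge1: "\<And>j. j < n \<Longrightarrow> 1 \<le> card (F j)" using Fne fin
      by (metis card_0_eq less_one not_le)
    have e: "(\<Sum>i<n. card (F i)) = card (F i) + (\<Sum>j\<in>{..<n}-{i}. card (F j))"
      using that by (simp add: sum.remove)
    have m: "(\<Sum>j\<in>{..<n}-{i}. card (F j)) \<ge> (\<Sum>j\<in>{..<n}-{i}. 1)"
      by (rule sum_mono) (use ge1 in auto)
    have "(\<Sum>j\<in>{..<n}-{i}. (1::nat)) = n - 1" using that by simp
    then have "(\<Sum>i<n. card (F i)) \<ge> 2 + (n - 1)" using c2 e m by linarith
    then show False using cardsum assms(5) n_def that by linarith
  qed
  have exP: "\<exists>p<n. F i = {S!p}" if iN: "i < n" for i
  proof -
    obtain w where w: "F i = {w}" using card_1_singletonE[OF card1[OF iN]] by blast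
    then have "w \<in> set S" using FV setS by auto
    then obtain p where "p < length S" "S!p = w" by (auto simp: in_set_conv_nth)
    then show ?thesis using w unfolding n_def by blast
  qed
  define P where "P i = (SOME p. p < n \<and> F i = {S!p})" for i
  have P: "P i < n \<and> F i = {S!P i}" if "i < n" for i
    unfolding P_def using someI_ex[OF exP[OF that]] .
  have Pinj: "P i = P i' \<Longrightarrow> i < n \<Longrightarrow> i' < n \<Longrightarrow> i = i'" for i i'
  proof -
    assume a: "P i = P i'" "i < n" "i' < n"
    have "S!P i \<in> F i" using P[OF a(2)] by simp
    moreover have "S!P i \<in> F i'" using P[OF a(3)] a(1) by simp
    ultimately show "i = i'" by (rule Funiq)
  qed
  have adj: "E (S!i) (S!P i)" if "i < n" for i
    using P[OF that] unfolding F_def nbhd_def by auto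
  have bnd: "t \<le> m" if "E (S!m) (S!P t)" "t < n" for m t
  proof (rule ccontr)
    assume "\<not> t \<le> m"
    then have "S!P t \<in> nbhd V E (S!m)" "m < t" using that gr(2) unfolding nbhd_def by auto
    moreover have "S!P t \<in> F t" using P[OF that(2)] by simp
    ultimately show False unfolding F_def by auto
  qed
  have invol: "P (P i) = i" if "i < n" for i
  proof (rule ccontr)
    define B where "B = {i. i < n \<and> P (P i) \<noteq> i}"
    assume "P (P i) \<noteq> i"
    then have "B \<noteq> {}" using that B_def by auto
    moreover have "finite B" unfolding B_def by simp
    ultimately have tB: "Max B \<in> B" and tmax: "\<And>b. b \<in> B \<Longrightarrow> b \<le> Max B" by auto
    define t where "t = Max B"
    have tn: "t < n" and bad: "P (P t) \<noteq> t" using tB t_def B_def by auto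
    have pn: "P t < n" using P tn by simp
    have ppn: "P (P t) < n" using P pn by simp
    have pppn: "P (P (P t)) < n" using P ppn by simp
    have "P (P (P (P t))) \<noteq> P (P t)"
    proof
      assume "P (P (P (P t))) = P (P t)"
      then have "P (P (P t)) = P t" using Pinj pppn pn by simp
      then have "P (P t) = t" using Pinj ppn tn by simp
      then show False using bad by simp
    qed
    then have ppB: "P (P t) \<in> B" using ppn B_def by simp
    have "E (S!P t) (S!P (P t))" using adj[OF pn] .
    then have "E (S!P (P t)) (S!P t)" using gr(3) by simp
    then have "t \<le> P (P t)" using bnd tn by simp
    moreover have "P (P t) \<le> t" using tmax[OF ppB] t_def by simp
    ultimately show False using bad by simp
  qed
  obtain i where i: "i < n" "S!i = x" "y \<in> F i"
    using assms(8) unfolding footprints_def F_def n_def by auto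
  have y: "y = S!P i" using P[OF i(1)] i(3) by simp
  have "x \<in> F (P i)" using P[of "P i"] P[OF i(1)] invol[OF i(1)] i(2) by simp
  then have "P i < length S \<and> S!(P i) = y \<and> x \<in> nbhd V E (S ! (P i)) - (\<Union>j<P i. nbhd V E (S ! j))"
    using y P[OF i(1)] unfolding F_def n_def by simp
  then show ?thesis unfolding footprints_def by (rule exI[of _ "P i"])
qed

end
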